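(* Let $\xi_0,\xi_1,\xi_2,\ldots$ be independent and identically distributed real random variables such that $\xi_0$ has zero mean, finite positive variance, and a moment generating function that exists on an open interval around zero. For $n\ge1$ define $\eta_j=\xi_{\min(j,n-j)}$ for $0\le j\le n-1$ (so $\eta_j=\eta_{n-j}$ for $1\le j\le n-1$) and for $x\in\mathbb{T}=\mathbb{R}/(2\pi\mathbb{Z})$ let $W^{sym}_n(x)=\sum_{j=0}^{n-1}\eta_j e^{ijx}$, with $\|W^{sym}_n\|_\infty=\max_{x\in\mathbb{T}}|W^{sym}_n(x)|$. Then \[ \mathbb{P}\left(\|W^{sym}_n\|_\infty\ge C_0(n\log n)^{1/2}\right)\le\frac{C_1}{n^2}, \] where $C_0,C_1>0$ depend only on the distribution of $\xi_0$.
   Context: Here $i$ is the imaginary unit. The coefficients with indices $0,1,\ldots,\lfloor n/2\rfloor$ are independent, and the remaining ones mirror them via $\eta_j=\eta_{n-j}$. *)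

theory Defs
  imports "HOL-Probability.Probability"
begin

definition sym_coeff :: "(nat \<Rightarrow> 'w \<Rightarrow> real) \<Rightarrow> nat \<Rightarrow> nat \<Rightarrow> 'w \<Rightarrow> real" where
  "sym_coeff \<xi> n j \<omega> = \<xi> (min j (n - j)) \<omega>"

text \<open>W^sym_n(x) = sum_{j=0}^{n-1} eta_j e^{ijx}, for x real (2pi-periodic, i.e. x on the torus).\<close>
definition Wsym :: "(nat \<Rightarrow> 'w \<Rightarrow> real) \<Rightarrow> nat \<Rightarrow> 'w \<Rightarrow> real \<Rightarrow> complex" where
  "Wsym \<xi> n \<omega> x = (\<Sum>j<n. complex_of_real (sym_coeff \<xi> n j \<omega>) * exp (\<i> * complex_of_real (real j * x)))"

text \<open>Sup norm over the torus; since W is 2pi-periodic and continuous this is the max over T.\<close>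
definition Wsym_supnorm :: "(nat \<Rightarrow> 'w \<Rightarrow> real) \<Rightarrow> nat \<Rightarrow> 'w \<Rightarrow> real" where
  "Wsym_supnorm \<xi> n \<omega> = (SUP x\<in>UNIV. cmod (Wsym \<xi> n \<omega> x))"

end

theory Submission
  imports Defs
begin

lemma exp_quad_bound: "exp (y::real) \<le> 1 + y + y\<^sup>2 * exp \<bar>y\<bar>"
proof -
  obtain t where t: "\<bar>t\<bar> \<le> \<bar>y\<bar>" "exp y = (\<Sum>m<2. (y ^ m) / fact m) + (exp t / fact 2) * y ^ 2"
    using Maclaurin_exp_le[of y 2] by blast
  have e: "exp t \<le> exp \<bar>y\<bar>" using t(1) by simp
  have "exp y = 1 + y + exp t / 2 * y\<^sup>2" using t(2) by (simp add: numeral_2_eq_2)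
  also have "\<dots> \<le> 1 + y + y\<^sup>2 * exp \<bar>y\<bar>"
  proof -
    have "exp t / 2 \<le> exp \<bar>y\<bar>" using e exp_gt_zero[of t] by linarith
    hence "exp t / 2 * y\<^sup>2 \<le> exp \<bar>y\<bar> * y\<^sup>2" by (rule mult_right_mono) simp
    thus ?thesis by (simp add: mult.commute)
  qed
  finally show ?thesis .
qed

lemma sq_le_exp: assumes "d > 0" shows "(x::real)\<^sup>2 \<le> 32 / d\<^sup>2 * exp (d * \<bar>x\<bar> / 4)"
proof -
  define u where "u = d * \<bar>x\<bar> / 4"
  have u0: "u \<ge> 0" using assms by (simp add: u_def)
  have "1 + u + u\<^sup>2/2 \<le> exp u" by (rule exp_lower_Taylor_quadratic[OF u0])
  hence "u\<^sup>2 \<le> 2 * exp u" using u0 by simp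
  moreover have "x\<^sup>2 = 16 / d\<^sup>2 * u\<^sup>2" using assms by (simp add: u_def power2_eq_square field_simps)
  ultimately have "x\<^sup>2 \<le> 16 / d\<^sup>2 * (2 * exp u)" by (metis mult_left_mono divide_nonneg_nonneg zero_le_power2 zero_le_numeral)
  thus ?thesis unfolding u_def by simp
qed

lemma (in prob_space) mgf_quad:
  fixes X :: "'a \<Rightarrow> real"
  assumes X[measurable]: "X \<in> borel_measurable M" and intX: "integrable M X"
    and mean: "expectation X = 0" and d: "\<delta> > 0"
    and mg: "\<And>t. \<bar>t\<bar> < \<delta> \<Longrightarrow> integrable M (\<lambda>\<omega>. exp (t * X \<omega>))"
  shows "\<exists>B\<ge>0. \<forall>s. \<bar>s\<bar> \<le> \<delta>/4 \<longrightarrow> expectation (\<lambda>\<omega>. exp (s * X \<omega>)) \<le> exp (B * s\<^sup>2)"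
proof -
  define G where "G \<omega> = 32/\<delta>\<^sup>2 * (exp ((\<delta>/2) * X \<omega>) + exp ((-\<delta>/2) * X \<omega>))" for \<omega>
  have iG: "integrable M G" unfolding G_def
    using mg[of "\<delta>/2"] mg[of "-\<delta>/2"] d by (intro integrable_mult_right Bochner_Integration.integrable_add) auto
  define B where "B = expectation G"
  have B0: "B \<ge> 0" unfolding B_def G_def by (intro integral_nonneg_AE) (use d in auto)
  have "expectation (\<lambda>\<omega>. exp (s * X \<omega>)) \<le> exp (B * s\<^sup>2)" if s: "\<bar>s\<bar> \<le> \<delta>/4" for s
  proof -
    have pt: "exp (s * X \<omega>) \<le> 1 + s * X \<omega> + s\<^sup>2 * G \<omega>" for \<omega>
    proof -
      have a: "(X \<omega>)\<^sup>2 \<le> 32 / \<delta>\<^sup>2 * exp (\<delta> * \<bar>X \<omega>\<bar> / 4)" by (rule sq_le_exp[OF d])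
      have b: "exp \<bar>s * X \<omega>\<bar> \<le> exp (\<delta> * \<bar>X \<omega>\<bar> / 4)"
      proof -
        have "\<bar>s * X \<omega>\<bar> \<le> \<delta>/4 * \<bar>X \<omega>\<bar>" unfolding abs_mult by (rule mult_right_mono[OF s]) simp
        thus ?thesis by simp
      qed
      have c: "(X \<omega>)\<^sup>2 * exp \<bar>s * X \<omega>\<bar> \<le> 32 / \<delta>\<^sup>2 * exp (\<delta> * \<bar>X \<omega>\<bar> / 4) * exp (\<delta> * \<bar>X \<omega>\<bar> / 4)"
        by (intro mult_mono a b) auto
      have e: "exp (\<delta> * \<bar>X \<omega>\<bar> / 4) * exp (\<delta> * \<bar>X \<omega>\<bar> / 4) = exp (\<delta> * \<bar>X \<omega>\<bar> / 2)"
        by (simp flip: exp_add)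
      have f: "exp (\<delta> * \<bar>X \<omega>\<bar> / 2) \<le> exp ((\<delta>/2) * X \<omega>) + exp ((-\<delta>/2) * X \<omega>)"
      proof -
        have "\<delta> * \<bar>X \<omega>\<bar> / 2 = (\<delta>/2) * X \<omega> \<or> \<delta> * \<bar>X \<omega>\<bar> / 2 = (-\<delta>/2) * X \<omega>"
          by (cases "X \<omega> \<ge> 0") auto
        moreover have "exp ((\<delta>/2) * X \<omega>) > 0" "exp ((-\<delta>/2) * X \<omega>) > 0" by auto
        ultimately show ?thesis by (metis add_increasing add_increasing2 less_imp_le order_refl)
      qed
      have g: "(X \<omega>)\<^sup>2 * exp \<bar>s * X \<omega>\<bar> \<le> G \<omega>"
      proof -
        have "(X \<omega>)\<^sup>2 * exp \<bar>s * X \<omega>\<bar> \<le> 32 / \<delta>\<^sup>2 * exp (\<delta> * \<bar>X \<omega>\<bar> / 2)"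
          using c e by (simp only: mult.assoc)
        also have "\<dots> \<le> 32 / \<delta>\<^sup>2 * (exp ((\<delta>/2) * X \<omega>) + exp ((-\<delta>/2) * X \<omega>))"
          by (rule mult_left_mono[OF f]) simp
        finally show ?thesis unfolding G_def .
      qed
      have "exp (s * X \<omega>) \<le> 1 + s * X \<omega> + (s * X \<omega>)\<^sup>2 * exp \<bar>s * X \<omega>\<bar>" by (rule exp_quad_bound)
      also have "(s * X \<omega>)\<^sup>2 * exp \<bar>s * X \<omega>\<bar> = s\<^sup>2 * ((X \<omega>)\<^sup>2 * exp \<bar>s * X \<omega>\<bar>)" by (simp add: power_mult_distrib)
      also have "\<dots> \<le> s\<^sup>2 * G \<omega>" by (rule mult_left_mono[OF g]) simp
      finally show ?thesis by simp
    qed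
    have ie: "integrable M (\<lambda>\<omega>. exp (s * X \<omega>))" using mg[of s] s d by simp
    have "expectation (\<lambda>\<omega>. exp (s * X \<omega>)) \<le> expectation (\<lambda>\<omega>. 1 + s * X \<omega> + s\<^sup>2 * G \<omega>)"
      using pt ie intX iG by (intro integral_mono) auto
    also have "\<dots> = 1 + s * expectation X + s\<^sup>2 * B"
      using intX iG unfolding B_def by (simp add: Bochner_Integration.integral_add prob_space)
    also have "\<dots> \<le> exp (B * s\<^sup>2)" using mean exp_ge_add_one_self[of "B * s\<^sup>2"] by (simp add: ac_simps)
    finally show ?thesis .
  qed
  thus ?thesis using B0 by blast
qed

lemma (in prob_space) chernoff_sym:
  fixes \<xi> :: "nat \<Rightarrow> 'a \<Rightarrow> real" and b :: "nat \<Rightarrow> real"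
  assumes rv[measurable]: "\<And>i. \<xi> i \<in> borel_measurable M"
    and indep: "indep_vars (\<lambda>_. borel) \<xi> UNIV"
    and mg: "\<And>k s. \<bar>s\<bar> \<le> \<delta>/4 \<Longrightarrow> integrable M (\<lambda>\<omega>. exp (s * \<xi> k \<omega>)) \<and>
               expectation (\<lambda>\<omega>. exp (s * \<xi> k \<omega>)) \<le> exp (B * s\<^sup>2)"
    and B: "B \<ge> 0" and t: "0 \<le> t" "t \<le> \<delta>/8" and b: "\<And>j. \<bar>b j\<bar> \<le> 1"
  shows "measure M {\<omega>\<in>space M. a \<le> (\<Sum>j<n. b j * \<xi> (min j (n-j)) \<omega>)} \<le> exp (4*B*t\<^sup>2*real n - t*a)"
proof -
  define \<sigma> where "\<sigma> j = min j (n-j)" for j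
  define K where "K = \<sigma> ` {..<n}"
  define c where "c k = (\<Sum>j\<in>{j\<in>{..<n}. \<sigma> j = k}. b j)" for k
  have finK: "finite K" unfolding K_def by simp
  have cardK: "card K \<le> n" unfolding K_def using card_image_le[of "{..<n}" \<sigma>] by simp
  have Ysum: "(\<Sum>j<n. b j * \<xi> (min j (n-j)) \<omega>) = (\<Sum>k\<in>K. t * c k * \<xi> k \<omega>) / t" if "t > 0" for \<omega>
  proof -
    have "(\<Sum>j<n. b j * \<xi> (min j (n-j)) \<omega>) = (\<Sum>j<n. b j * \<xi> (\<sigma> j) \<omega>)" by (simp add: \<sigma>_def)
    also have "\<dots> = (\<Sum>k\<in>K. \<Sum>j\<in>{j\<in>{..<n}. \<sigma> j = k}. b j * \<xi> (\<sigma> j) \<omega>)"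
      unfolding K_def by (rule sum.image_gen) simp
    also have "\<dots> = (\<Sum>k\<in>K. c k * \<xi> k \<omega>)"
      unfolding c_def sum_distrib_right by (intro sum.cong refl) auto
    finally show ?thesis using that by (simp add: sum_distrib_left[symmetric] mult.assoc)
  qed
  have cb: "\<bar>c k\<bar> \<le> 2" for k
  proof -
    have sub: "{j\<in>{..<n}. \<sigma> j = k} \<subseteq> {k, n-k}" by (auto simp: \<sigma>_def min_def)
    have cd: "card {j\<in>{..<n}. \<sigma> j = k} \<le> 2"
    proof -
      have "card {j\<in>{..<n}. \<sigma> j = k} \<le> card {k, n-k}" by (rule card_mono[OF _ sub]) simp
      also have "card {k, n-k} \<le> 2" by (cases "k = n-k") auto
      finally show ?thesis .
    qed
    have "\<bar>c k\<bar> \<le> (\<Sum>j\<in>{j\<in>{..<n}. \<sigma> j = k}. \<bar>b j\<bar>)" unfolding c_def by (rule sum_abs)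
    also have "\<dots> \<le> real (card {j\<in>{..<n}. \<sigma> j = k}) * 1" by (rule sum_bounded_above) (use b in auto)
    also have "\<dots> \<le> 2" using cd by simp
    finally show ?thesis .
  qed
  define Z where "Z k \<omega> = exp (t * c k * \<xi> k \<omega>)" for k \<omega>
  have Zm[measurable]: "Z k \<in> borel_measurable M" for k unfolding Z_def by measurable
  have tc: "\<bar>t * c k\<bar> \<le> \<delta>/4" for k
  proof -
    have "\<bar>t * c k\<bar> = t * \<bar>c k\<bar>" using t by (simp add: abs_mult)
    also have "\<dots> \<le> t * 2" using cb t by (simp add: mult_left_mono)
    finally show ?thesis using t by simp
  qed
  have iZ: "integrable M (Z k)" for k using mg[OF tc[of k]] unfolding Z_def by simp
  have EZ: "expectation (Z k) \<le> exp (4 * B * t\<^sup>2)" for k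
  proof -
    have "expectation (Z k) \<le> exp (B * (t * c k)\<^sup>2)" using mg[OF tc[of k]] unfolding Z_def by simp
    also have "B * (t * c k)\<^sup>2 \<le> 4 * B * t\<^sup>2"
    proof -
      have "(c k)\<^sup>2 \<le> 2\<^sup>2" using power_mono[OF cb[of k], of 2] by simp
      hence "t\<^sup>2 * (c k)\<^sup>2 \<le> t\<^sup>2 * 4" by (intro mult_left_mono) simp_all
      hence "(t * c k)\<^sup>2 \<le> 4 * t\<^sup>2" by (simp add: power_mult_distrib mult.commute)
      from mult_left_mono[OF this B] show ?thesis by (simp add: ac_simps)
    qed
    finally show ?thesis by simp
  qed
  have indZ: "indep_vars (\<lambda>_. borel) Z K"
    unfolding Z_def
    by (rule indep_vars_compose2[where X=\<xi>, OF indep_vars_subset[OF indep]]) auto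
  define P where "P \<omega> = (\<Prod>k\<in>K. Z k \<omega>)" for \<omega>
  have iP: "integrable M P" unfolding P_def by (rule indep_vars_integrable[OF finK indZ iZ])
  have EP: "expectation P = (\<Prod>k\<in>K. expectation (Z k))"
    unfolding P_def by (rule indep_vars_lebesgue_integral[OF finK indZ iZ])
  also have "\<dots> \<le> (\<Prod>k\<in>K. exp (4 * B * t\<^sup>2))"
    by (intro prod_mono conjI EZ integral_nonneg_AE) (auto simp: Z_def)
  also have "\<dots> = exp (real (card K) * (4 * B * t\<^sup>2))" by (simp add: exp_of_nat_mult)
  also have "\<dots> \<le> exp (4*B*t\<^sup>2*real n)"
    using cardK B by (simp add: mult_right_mono mult.commute)
  finally have EPb: "expectation P \<le> exp (4*B*t\<^sup>2*real n)" .
  have Pexp: "P \<omega> = exp (t * (\<Sum>j<n. b j * \<xi> (min j (n-j)) \<omega>))" if "t > 0" for \<omega>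
    unfolding P_def Z_def Ysum[OF that] using that by (simp add: exp_sum[OF finK])
  show ?thesis
  proof (cases "t = 0")
    case True
    have "measure M {\<omega>\<in>space M. a \<le> (\<Sum>j<n. b j * \<xi> (min j (n-j)) \<omega>)} \<le> 1" by (rule prob_le_1)
    thus ?thesis using True by simp
  next
    case False
    hence tp: "t > 0" using t by simp
    have "{\<omega>\<in>space M. a \<le> (\<Sum>j<n. b j * \<xi> (min j (n-j)) \<omega>)} \<subseteq> {\<omega>\<in>space M. exp (t*a) \<le> P \<omega>}"
      using tp by (auto simp: Pexp mult_left_mono)
    hence "measure M {\<omega>\<in>space M. a \<le> (\<Sum>j<n. b j * \<xi> (min j (n-j)) \<omega>)} \<le> measure M {\<omega>\<in>space M. exp (t*a) \<le> P \<omega>}"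
      by (intro finite_measure_mono) (auto simp: P_def)
    also have "\<dots> \<le> expectation P / exp (t*a)"
      by (rule integral_Markov_inequality_measure[OF iP, where A="space M"]) (auto simp: P_def Z_def intro!: prod_nonneg)
    also have "\<dots> \<le> exp (4*B*t\<^sup>2*real n) / exp (t*a)" by (intro divide_right_mono EPb) simp
    also have "\<dots> = exp (4*B*t\<^sup>2*real n - t*a)" by (simp add: exp_diff)
    finally show ?thesis .
  qed
qed

lemma iexp_lip: "cmod (exp (\<i> * complex_of_real a) - exp (\<i> * complex_of_real b)) \<le> \<bar>a - b\<bar>"
proof -
  have "exp (\<i> * complex_of_real a) - exp (\<i> * complex_of_real b)
        = exp (\<i> * complex_of_real b) * (exp (\<i> * complex_of_real (a - b)) - 1)"
    by (simp add: algebra_simps flip: exp_add)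
  hence "cmod (exp (\<i> * complex_of_real a) - exp (\<i> * complex_of_real b)) = cmod (exp (\<i> * complex_of_real (a - b)) - 1)"
    by (simp add: norm_mult)
  also have "\<dots> \<le> \<bar>a - b\<bar>" using iexp_approx1[of "a - b" 0] by simp
  finally show ?thesis .
qed

lemma W_lip:
  fixes \<eta> :: "nat \<Rightarrow> real"
  shows "cmod ((\<Sum>j<n. complex_of_real (\<eta> j) * exp (\<i> * complex_of_real (real j * x)))
             - (\<Sum>j<n. complex_of_real (\<eta> j) * exp (\<i> * complex_of_real (real j * y))))
         \<le> real n * (\<Sum>j<n. \<bar>\<eta> j\<bar>) * \<bar>x - y\<bar>"
proof -
  have "cmod ((\<Sum>j<n. complex_of_real (\<eta> j) * exp (\<i> * complex_of_real (real j * x)))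
             - (\<Sum>j<n. complex_of_real (\<eta> j) * exp (\<i> * complex_of_real (real j * y))))
       = cmod (\<Sum>j<n. complex_of_real (\<eta> j) * (exp (\<i> * complex_of_real (real j * x)) - exp (\<i> * complex_of_real (real j * y))))"
    by (simp add: sum_subtractf algebra_simps)
  also have "\<dots> \<le> (\<Sum>j<n. cmod (complex_of_real (\<eta> j) * (exp (\<i> * complex_of_real (real j * x)) - exp (\<i> * complex_of_real (real j * y)))))"
    by (rule norm_sum)
  also have "\<dots> \<le> (\<Sum>j<n. \<bar>\<eta> j\<bar> * (real n * \<bar>x - y\<bar>))"
  proof (rule sum_mono)
    fix j assume j: "j \<in> {..<n}"
    have "cmod (exp (\<i> * complex_of_real (real j * x)) - exp (\<i> * complex_of_real (real j * y))) \<le> \<bar>real j * x - real j * y\<bar>"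
      by (rule iexp_lip)
    also have "\<dots> = real j * \<bar>x - y\<bar>" by (simp add: abs_mult flip: right_diff_distrib)
    also have "\<dots> \<le> real n * \<bar>x - y\<bar>" using j by (intro mult_right_mono) auto
    finally show "cmod (complex_of_real (\<eta> j) * (exp (\<i> * complex_of_real (real j * x)) - exp (\<i> * complex_of_real (real j * y)))) \<le> \<bar>\<eta> j\<bar> * (real n * \<bar>x - y\<bar>)"
      by (simp add: norm_mult mult_left_mono)
  qed
  also have "\<dots> = (\<Sum>j<n. \<bar>\<eta> j\<bar>) * (real n * \<bar>x - y\<bar>)" by (rule sum_distrib_right[symmetric])
  also have "\<dots> = real n * (\<Sum>j<n. \<bar>\<eta> j\<bar>) * \<bar>x - y\<bar>" by (simp add: ac_simps)
  finally show ?thesis .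
qed

lemma W_periodic:
  fixes \<eta> :: "nat \<Rightarrow> real" and k :: int
  shows "(\<Sum>j<n. complex_of_real (\<eta> j) * exp (\<i> * complex_of_real (real j * (x - 2 * pi * k))))
       = (\<Sum>j<n. complex_of_real (\<eta> j) * exp (\<i> * complex_of_real (real j * x)))"
proof (intro sum.cong refl)
  fix j
  have "exp (\<i> * complex_of_real (real j * (x - 2 * pi * k))) = cis (real j * x - 2 * pi * (of_int (int j * k)))"
    by (simp add: cis_conv_exp algebra_simps)
  also have "\<dots> = cis (real j * x) * inverse (cis (2 * pi * of_int (int j * k)))"
    by (simp add: cis_divide[symmetric] divide_inverse)
  also have "cis (2 * pi * of_int (int j * k)) = 1"
    by (metis cis_multiple_2pi Ints_of_int mult.commute)
  finally show "complex_of_real (\<eta> j) * exp (\<i> * complex_of_real (real j * (x - 2 * pi * k)))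
       = complex_of_real (\<eta> j) * exp (\<i> * complex_of_real (real j * x))"
    by (simp add: cis_conv_exp)
qed

lemma W_grid:
  fixes \<eta> :: "nat \<Rightarrow> real" and n :: nat
  defines "W \<equiv> \<lambda>x. (\<Sum>j<n. complex_of_real (\<eta> j) * exp (\<i> * complex_of_real (real j * x)))"
  assumes h: "h > 0" and grid: "\<And>m. m \<le> nat \<lceil>2 * pi / h\<rceil> \<Longrightarrow> cmod (W (real m * h)) \<le> A"
  shows "cmod (W x) \<le> A + real n * (\<Sum>j<n. \<bar>\<eta> j\<bar>) * h"
proof -
  define k where "k = \<lfloor>x / (2 * pi)\<rfloor>"
  define x' where "x' = x - 2 * pi * k"
  have Wx: "W x = W x'" unfolding W_def x'_def by (rule W_periodic[symmetric])
  have x'0: "0 \<le> x'" and x'1: "x' < 2 * pi"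
  proof -
    have "real_of_int k \<le> x / (2*pi)" "x / (2*pi) < real_of_int k + 1" unfolding k_def by linarith+
    thus "0 \<le> x'" "x' < 2 * pi" unfolding x'_def using pi_gt_zero by (simp_all add: field_simps)
  qed
  define m where "m = nat \<lfloor>x' / h\<rfloor>"
  have mh: "real m * h \<le> x'" "x' < real m * h + h"
  proof -
    have f0: "0 \<le> \<lfloor>x' / h\<rfloor>" using x'0 h by simp
    have "real m = of_int \<lfloor>x' / h\<rfloor>" unfolding m_def using f0 by simp
    moreover have "of_int \<lfloor>x' / h\<rfloor> \<le> x' / h" "x' / h < of_int \<lfloor>x' / h\<rfloor> + 1" by linarith+
    ultimately have "real m \<le> x' / h" "x' / h < real m + 1" by simp_all
    thus "real m * h \<le> x'" "x' < real m * h + h" using h by (simp_all add: field_simps)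
  qed
  have mN: "m \<le> nat \<lceil>2 * pi / h\<rceil>"
  proof -
    have "x' / h \<le> 2 * pi / h" using x'1 h by (simp add: divide_right_mono)
    hence "\<lfloor>x' / h\<rfloor> \<le> \<lceil>2 * pi / h\<rceil>" by linarith
    thus ?thesis unfolding m_def by simp
  qed
  have t1: "cmod (W x') \<le> cmod (W (real m * h)) + cmod (W x' - W (real m * h))"
    by (metis norm_triangle_sub add.commute)
  have t2: "cmod (W x' - W (real m * h)) \<le> real n * (\<Sum>j<n. \<bar>\<eta> j\<bar>) * \<bar>x' - real m * h\<bar>"
    unfolding W_def by (rule W_lip)
  have t3: "real n * (\<Sum>j<n. \<bar>\<eta> j\<bar>) * \<bar>x' - real m * h\<bar> \<le> real n * (\<Sum>j<n. \<bar>\<eta> j\<bar>) * h"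
    using mh by (intro mult_left_mono) (auto intro: sum_nonneg)
  have t0: "cmod (W x) = cmod (W x')" using Wx by simp
  show ?thesis using t0 grid[OF mN] t1 t2 t3 by linarith
qed

lemma (in prob_space) point_bound:
  fixes \<xi> :: "nat \<Rightarrow> 'a \<Rightarrow> real"
  assumes rv[measurable]: "\<And>i. \<xi> i \<in> borel_measurable M"
    and indep: "indep_vars (\<lambda>_. borel) \<xi> UNIV"
    and mg: "\<And>k s. \<bar>s\<bar> \<le> \<delta>/4 \<Longrightarrow> integrable M (\<lambda>\<omega>. exp (s * \<xi> k \<omega>)) \<and>
               expectation (\<lambda>\<omega>. exp (s * \<xi> k \<omega>)) \<le> exp (B * s\<^sup>2)"
    and B: "B \<ge> 0" and t: "0 \<le> t" "t \<le> \<delta>/8"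
  shows "measure M {\<omega>\<in>space M. 2*a \<le> cmod (Wsym \<xi> n \<omega> x)} \<le> 4 * exp (4*B*t\<^sup>2*real n - t*a)"
proof -
  define Y where "Y b \<omega> = (\<Sum>j<n. b j * \<xi> (min j (n-j)) \<omega>)" for b \<omega>
  define E where "E b = {\<omega>\<in>space M. a \<le> Y b \<omega>}" for b
  have ch: "measure M (E b) \<le> exp (4*B*t\<^sup>2*real n - t*a)" if "\<And>j. \<bar>b j\<bar> \<le> 1" for b
    unfolding E_def Y_def by (rule chernoff_sym[OF rv indep mg B t that])
  have Es: "E b \<in> sets M" for b unfolding E_def Y_def by measurable
  define b1 where "b1 j = cos (real j * x)" for j
  define b2 where "b2 j = - cos (real j * x)" for j
  define b3 where "b3 j = sin (real j * x)" for j
  define b4 where "b4 j = - sin (real j * x)" for j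
  have ReW: "Re (Wsym \<xi> n \<omega> x) = Y b1 \<omega>" for \<omega>
    by (simp add: Wsym_def sym_coeff_def Y_def b1_def Re_exp mult.commute)
  have ImW: "Im (Wsym \<xi> n \<omega> x) = Y b3 \<omega>" for \<omega>
    by (simp add: Wsym_def sym_coeff_def Y_def b3_def Im_exp mult.commute)
  have Y2: "Y b2 \<omega> = - Y b1 \<omega>" for \<omega> by (simp add: Y_def b1_def b2_def sum_negf)
  have Y4: "Y b4 \<omega> = - Y b3 \<omega>" for \<omega> by (simp add: Y_def b3_def b4_def sum_negf)
  have sub: "{\<omega>\<in>space M. 2*a \<le> cmod (Wsym \<xi> n \<omega> x)} \<subseteq> ((E b1 \<union> E b2) \<union> E b3) \<union> E b4"
  proof
    fix \<omega> assume "\<omega> \<in> {\<omega>\<in>space M. 2*a \<le> cmod (Wsym \<xi> n \<omega> x)}"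
    hence w: "\<omega> \<in> space M" "2*a \<le> cmod (Wsym \<xi> n \<omega> x)" by auto
    have "cmod (Wsym \<xi> n \<omega> x) \<le> \<bar>Y b1 \<omega>\<bar> + \<bar>Y b3 \<omega>\<bar>" using cmod_le[of "Wsym \<xi> n \<omega> x"] ReW ImW by simp
    hence "a \<le> Y b1 \<omega> \<or> a \<le> Y b2 \<omega> \<or> a \<le> Y b3 \<omega> \<or> a \<le> Y b4 \<omega>" using w(2) Y2 Y4 by (auto simp: abs_if split: if_splits)
    thus "\<omega> \<in> ((E b1 \<union> E b2) \<union> E b3) \<union> E b4" using w(1) unfolding E_def by auto
  qed
  have m0: "measure M {\<omega>\<in>space M. 2*a \<le> cmod (Wsym \<xi> n \<omega> x)} \<le> measure M (((E b1 \<union> E b2) \<union> E b3) \<union> E b4)"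
    by (rule finite_measure_mono[OF sub]) (intro sets.Un Es)
  have m1: "measure M (((E b1 \<union> E b2) \<union> E b3) \<union> E b4) \<le> measure M ((E b1 \<union> E b2) \<union> E b3) + measure M (E b4)"
    by (rule measure_Un_le) (intro sets.Un Es)+
  have m2: "measure M ((E b1 \<union> E b2) \<union> E b3) \<le> measure M (E b1 \<union> E b2) + measure M (E b3)"
    by (rule measure_Un_le) (intro sets.Un Es)+
  have m3: "measure M (E b1 \<union> E b2) \<le> measure M (E b1) + measure M (E b2)"
    by (rule measure_Un_le) (intro sets.Un Es)+
  have m4: "measure M (E b1) + measure M (E b2) + measure M (E b3) + measure M (E b4) \<le> 4 * exp (4*B*t\<^sup>2*real n - t*a)"
    using ch[of b1] ch[of b2] ch[of b3] ch[of b4] by (simp add: b1_def b2_def b3_def b4_def)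
  show ?thesis using m0 m1 m2 m3 m4 by linarith
qed

lemma aux_1: "(x::real) > 0 \<Longrightarrow> x * x ^ 3 * (1 / x ^ 4) = 1"
  by (simp add: eval_nat_numeral)
lemma aux_2: "(x::real) > 0 \<Longrightarrow> 10 * x ^ 4 * (4 / x ^ 7) = 40 / x ^ 3"
  by (simp add: eval_nat_numeral field_simps)
lemma aux_3: "(x::real) \<ge> 2 \<Longrightarrow> 40 / x ^ 3 \<le> 40 / x\<^sup>2"
  by (intro divide_left_mono) (auto simp: power2_eq_square power3_eq_cube)
lemma aux_4: assumes "real N \<le> 2 * pi * x + 1" "x \<ge> 1" shows "real (N + 1) \<le> 10 * x"
proof -
  have "2 * pi * x \<le> 2 * 4 * x" using pi_less_4 assms(2) by (intro mult_right_mono) auto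
  thus ?thesis using assms by linarith
qed
lemma aux_6: "(x::real) > 0 \<Longrightarrow> x * m / x ^ 3 = m / x\<^sup>2"
  by (simp add: eval_nat_numeral)
lemma aux_5: assumes "(n::nat) \<ge> 2" shows "ln (real n) \<ge> 2/3"
proof -
  have "ln 2 \<le> ln (real n)" using assms by (subst ln_le_cancel_iff) auto
  thus ?thesis using ln2_ge_two_thirds by linarith
qed

lemma bx_1: assumes "L \<le> (x::real)" "x \<ge> 2" "L > 0" shows "sqrt (L / x) \<le> 1"
proof -
  have "L / x \<le> 1" using assms by simp
  thus ?thesis by simp
qed
lemma bx_2: assumes "x \<ge> (2::real)" "L > 0" shows "4*B*(\<delta>/8 * sqrt (L / x))\<^sup>2*x = B * \<delta>\<^sup>2 * L / 16"
proof -
  have "(\<delta>/8 * sqrt (L / x))\<^sup>2 = \<delta>\<^sup>2/64 * (L / x)" using assms by (simp add: power_mult_distrib power_divide)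
  thus ?thesis using assms by (simp add: field_simps)
qed
lemma bx_3: assumes "x \<ge> (2::real)" "L > 0" shows "(\<delta>/8 * sqrt (L / x)) * ((C0 * sqrt (x * L))/4) = \<delta> * C0 * L / 32"
proof -
  have "L / x * (x * L) = L * L" using assms by (simp add: field_simps)
  hence "sqrt (L / x) * sqrt (x * L) = L" using assms by (simp flip: real_sqrt_mult)
  moreover have "(\<delta>/8 * sqrt (L / x)) * ((C0 * sqrt (x * L))/4) = \<delta> * C0 * (sqrt (L / x) * sqrt (x * L)) / 32"
    by (simp add: ac_simps)
  ultimately show ?thesis by simp
qed
lemma bx_4: fixes C0 :: real assumes "C0 \<ge> 32 * (7 + B * \<delta>\<^sup>2 / 16) / \<delta>" "\<delta> > 0" shows "\<delta> * C0 \<ge> 32 * (7 + B * \<delta>\<^sup>2 / 16)"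
  using assms by (simp add: field_simps)
lemma bx_5: assumes "exp L = (x::real)" "x > 0" shows "exp (- 7 * L) = 1 / x ^ 7"
proof -
  have "exp (real 7 * L) = exp L ^ 7" by (rule exp_of_nat_mult)
  hence "exp (7 * L) = x ^ 7" using assms by simp
  thus ?thesis by (simp add: exp_minus inverse_eq_divide)
qed

theorem mainTheorem9:
  fixes M :: "'w measure" and \<xi> :: "nat \<Rightarrow> 'w \<Rightarrow> real"
  assumes "prob_space M"
    and rv: "\<And>i. \<xi> i \<in> borel_measurable M"
    and indep: "prob_space.indep_vars M (\<lambda>_. borel) \<xi> UNIV"
    and ident: "\<And>i. distr M borel (\<xi> i) = distr M borel (\<xi> 0)"
    and int0: "integrable M (\<xi> 0)"
    and mean0: "prob_space.expectation M (\<xi> 0) = 0"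
    and var_fin: "integrable M (\<lambda>\<omega>. (\<xi> 0 \<omega>)\<^sup>2)"
    and var_pos: "prob_space.variance M (\<xi> 0) > 0"
    and mgf: "\<exists>\<delta>>0. \<forall>t::real. \<bar>t\<bar> < \<delta> \<longrightarrow> integrable M (\<lambda>\<omega>. exp (t * \<xi> 0 \<omega>))"
  shows "\<exists>C0>0. \<exists>C1>0. \<forall>n::nat. n \<ge> 1 \<longrightarrow>
           measure M {\<omega> \<in> space M. Wsym_supnorm \<xi> n \<omega> \<ge> C0 * sqrt (real n * ln (real n))}
             \<le> C1 / (real n)\<^sup>2"
proof -
  interpret P: prob_space M by fact
  note rv[measurable]
  obtain \<delta> where d: "\<delta> > 0" and mgd: "\<And>t. \<bar>t\<bar> < \<delta> \<Longrightarrow> integrable M (\<lambda>\<omega>. exp (t * \<xi> 0 \<omega>))"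
    using mgf by blast
  obtain B where B: "B \<ge> 0" and Bb: "\<And>s. \<bar>s\<bar> \<le> \<delta>/4 \<Longrightarrow> P.expectation (\<lambda>\<omega>. exp (s * \<xi> 0 \<omega>)) \<le> exp (B * s\<^sup>2)"
    using P.mgf_quad[OF rv int0 mean0 d mgd] by blast
  have tr: "integrable M (\<lambda>\<omega>. g (\<xi> k \<omega>)) \<and> P.expectation (\<lambda>\<omega>. g (\<xi> k \<omega>)) = P.expectation (\<lambda>\<omega>. g (\<xi> 0 \<omega>))"
    if g[measurable]: "g \<in> borel_measurable borel" and i: "integrable M (\<lambda>\<omega>. g (\<xi> 0 \<omega>))" for k and g :: "real \<Rightarrow> real"
  proof
    have "integrable (distr M borel (\<xi> 0)) g" using integrable_distr_eq[of "\<xi> 0" M borel g] i by simp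
    hence "integrable (distr M borel (\<xi> k)) g" using ident[of k] by simp
    thus "integrable M (\<lambda>\<omega>. g (\<xi> k \<omega>))" using integrable_distr_eq[of "\<xi> k" M borel g] by simp
    have "P.expectation (\<lambda>\<omega>. g (\<xi> k \<omega>)) = integral\<^sup>L (distr M borel (\<xi> k)) g"
      by (rule integral_distr[symmetric]) simp_all
    also have "\<dots> = integral\<^sup>L (distr M borel (\<xi> 0)) g" using ident[of k] by simp
    also have "\<dots> = P.expectation (\<lambda>\<omega>. g (\<xi> 0 \<omega>))" by (rule integral_distr) simp_all
    finally show "P.expectation (\<lambda>\<omega>. g (\<xi> k \<omega>)) = P.expectation (\<lambda>\<omega>. g (\<xi> 0 \<omega>))" .
  qed
  have mgk: "integrable M (\<lambda>\<omega>. exp (s * \<xi> k \<omega>)) \<and> P.expectation (\<lambda>\<omega>. exp (s * \<xi> k \<omega>)) \<le> exp (B * s\<^sup>2)"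
    if s: "\<bar>s\<bar> \<le> \<delta>/4" for k s
  proof -
    have "\<bar>s\<bar> < \<delta>" using s d by simp
    hence i: "integrable M (\<lambda>\<omega>. exp (s * \<xi> 0 \<omega>))" by (rule mgd)
    have "integrable M (\<lambda>\<omega>. (\<lambda>x. exp (s * x)) (\<xi> k \<omega>)) \<and>
          P.expectation (\<lambda>\<omega>. (\<lambda>x. exp (s * x)) (\<xi> k \<omega>)) = P.expectation (\<lambda>\<omega>. (\<lambda>x. exp (s * x)) (\<xi> 0 \<omega>))"
      by (rule tr) (use i in simp_all)
    thus ?thesis using Bb[OF s] by simp
  qed
  have absk: "integrable M (\<lambda>\<omega>. \<bar>\<xi> k \<omega>\<bar>) \<and> P.expectation (\<lambda>\<omega>. \<bar>\<xi> k \<omega>\<bar>) = P.expectation (\<lambda>\<omega>. \<bar>\<xi> 0 \<omega>\<bar>)" for k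
    by (rule tr) (use int0 in auto)
  define m1 where "m1 = P.expectation (\<lambda>\<omega>. \<bar>\<xi> 0 \<omega>\<bar>)"
  have m1: "m1 \<ge> 0" unfolding m1_def by (rule integral_nonneg_AE) simp
  define C0 where "C0 = max 4 (32 * (7 + B * \<delta>\<^sup>2 / 16) / \<delta>)"
  define C1 where "C1 = m1 + 41"
  have C0: "C0 \<ge> 4" "C0 \<ge> 32 * (7 + B * \<delta>\<^sup>2 / 16) / \<delta>" unfolding C0_def by simp_all
  have C1: "C1 \<ge> 1" using m1 unfolding C1_def by simp
  have main: "measure M {\<omega> \<in> space M. Wsym_supnorm \<xi> n \<omega> \<ge> C0 * sqrt (real n * ln (real n))} \<le> C1 / (real n)\<^sup>2"
    if n1: "n \<ge> 1" for n
  proof (cases "n = 1")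
    case True
    have "measure M {\<omega> \<in> space M. Wsym_supnorm \<xi> n \<omega> \<ge> C0 * sqrt (real n * ln (real n))} \<le> 1"
      by (rule P.prob_le_1)
    also have "1 \<le> C1 / (real n)\<^sup>2" using True C1 by simp
    finally show ?thesis .
  next
    case False
    hence n2: "n \<ge> 2" using n1 by simp
    hence nr: "real n \<ge> 2" by simp
    define L where "L = ln (real n)"
    have L0: "L > 0" unfolding L_def using nr by simp
    have Ln: "L \<le> real n" unfolding L_def using nr by (simp add: less_imp_le)
    have L23: "L \<ge> 2/3" unfolding L_def using n2 by (rule aux_5)
    have nL1: "real n * L \<ge> 1"
    proof -
      have "real n * L \<ge> 2 * (2/3)" using nr L23 by (intro mult_mono) auto
      thus ?thesis by simp
    qed
    define T where "T = C0 * sqrt (real n * L)"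
    have sq1: "sqrt (real n * L) \<ge> 1" using nL1 by simp
    have T4: "T \<ge> 4" unfolding T_def using C0(1) sq1 mult_mono[OF C0(1) sq1] by simp
    define h where "h = 1 / real n ^ 4"
    have h0: "h > 0" unfolding h_def using nr by simp
    define N where "N = nat \<lceil>2 * pi / h\<rceil>"
    define S where "S \<omega> = (\<Sum>j<n. \<bar>sym_coeff \<xi> n j \<omega>\<bar>)" for \<omega>
    define E0 where "E0 = {\<omega>\<in>space M. real n ^ 3 \<le> S \<omega>}"
    define Em where "Em m = {\<omega>\<in>space M. 2 * (T/4) \<le> cmod (Wsym \<xi> n \<omega> (real m * h))}" for m :: nat
    have Sm[measurable]: "S \<in> borel_measurable M" unfolding S_def sym_coeff_def by measurable
    have E0s: "E0 \<in> sets M" unfolding E0_def by measurable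
    have Ems: "Em m \<in> sets M" for m unfolding Em_def Wsym_def sym_coeff_def by measurable
    have sub: "{\<omega> \<in> space M. Wsym_supnorm \<xi> n \<omega> \<ge> C0 * sqrt (real n * ln (real n))} \<subseteq> E0 \<union> (\<Union>m\<in>{..N}. Em m)"
    proof
      fix \<omega> assume "\<omega> \<in> {\<omega> \<in> space M. Wsym_supnorm \<xi> n \<omega> \<ge> C0 * sqrt (real n * ln (real n))}"
      hence w: "\<omega> \<in> space M" "T \<le> Wsym_supnorm \<xi> n \<omega>" unfolding T_def L_def by auto
      show "\<omega> \<in> E0 \<union> (\<Union>m\<in>{..N}. Em m)"
      proof (rule ccontr)
        assume "\<omega> \<notin> E0 \<union> (\<Union>m\<in>{..N}. Em m)"
        hence a1: "S \<omega> < real n ^ 3" and a2: "\<And>m. m \<le> N \<Longrightarrow> cmod (Wsym \<xi> n \<omega> (real m * h)) < T/2"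
          using w(1) unfolding E0_def Em_def by (auto simp: not_le)
        have g: "cmod (Wsym \<xi> n \<omega> x) \<le> T/2 + real n * S \<omega> * h" for x
          using W_grid[where h=h and n=n and \<eta>="\<lambda>j. sym_coeff \<xi> n j \<omega>" and A="T/2" and x=x] h0 a2
          unfolding Wsym_def S_def N_def by (auto simp: less_imp_le)
        have "real n * S \<omega> * h \<le> real n * real n ^ 3 * h"
          using a1 h0 by (intro mult_right_mono mult_left_mono) auto
        also have "\<dots> = 1" unfolding h_def using nr by (intro aux_1) simp
        finally have "cmod (Wsym \<xi> n \<omega> x) \<le> T/2 + 1" for x using g[of x] by linarith
        hence "Wsym_supnorm \<xi> n \<omega> \<le> T/2 + 1" unfolding Wsym_supnorm_def by (intro cSUP_least) auto
        thus False using w(2) T4 by linarith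
      qed
    qed
    have "measure M {\<omega> \<in> space M. Wsym_supnorm \<xi> n \<omega> \<ge> C0 * sqrt (real n * ln (real n))}
          \<le> measure M (E0 \<union> (\<Union>m\<in>{..N}. Em m))"
      by (rule P.finite_measure_mono[OF sub]) (use E0s Ems in auto)
    also have "\<dots> \<le> measure M E0 + measure M (\<Union>m\<in>{..N}. Em m)"
      by (rule measure_Un_le) (use E0s Ems in auto)
    finally have st1: "measure M {\<omega> \<in> space M. Wsym_supnorm \<xi> n \<omega> \<ge> C0 * sqrt (real n * ln (real n))}
          \<le> measure M E0 + measure M (\<Union>m\<in>{..N}. Em m)" .
    have st2: "measure M (\<Union>m\<in>{..N}. Em m) \<le> (\<Sum>m\<le>N. measure M (Em m))"
      by (rule P.finite_measure_subadditive_finite) (use Ems in auto)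
    have iS: "integrable M S" unfolding S_def sym_coeff_def
      by (rule Bochner_Integration.integrable_sum) (use absk in blast)
    have ES: "P.expectation S = real n * m1"
    proof -
      have "P.expectation S = (\<Sum>j<n. P.expectation (\<lambda>\<omega>. \<bar>\<xi> (min j (n-j)) \<omega>\<bar>))"
        unfolding S_def sym_coeff_def by (rule Bochner_Integration.integral_sum) (use absk in blast)
      also have "\<dots> = (\<Sum>j<n. m1)" by (rule sum.cong[OF refl]) (use absk in \<open>simp only: m1_def\<close>)
      finally show ?thesis by simp
    qed
    have st3: "measure M E0 \<le> m1 / (real n)\<^sup>2"
    proof -
      have "measure M E0 \<le> P.expectation S / real n ^ 3"
        unfolding E0_def
      proof (rule integral_Markov_inequality_measure[OF iS, where A="space M"])
        show "space M \<in> sets M" by (rule sets.top)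
        show "AE x in M. 0 \<le> S x" unfolding S_def by (intro AE_I2 sum_nonneg) simp
        show "0 < real n ^ 3" using nr by simp
      qed
      also have "\<dots> = m1 / (real n)\<^sup>2" unfolding ES using nr by (intro aux_6) simp
      finally show ?thesis .
    qed
    define t where "t = \<delta>/8 * sqrt (L / real n)"
    have sLn: "sqrt (L / real n) \<le> 1" using Ln nr L0 by (rule bx_1)
    have t0: "0 \<le> t" unfolding t_def using d L0 nr by simp
    have t1: "t \<le> \<delta>/8" unfolding t_def using d sLn by (simp add: mult_left_le)
    have t2: "4*B*t\<^sup>2*real n = B * \<delta>\<^sup>2 * L / 16" unfolding t_def using nr L0 by (rule bx_2)
    have t3: "t * (T/4) = \<delta> * C0 * L / 32" unfolding t_def T_def using nr L0 by (rule bx_3)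
    have expo: "4*B*t\<^sup>2*real n - t*(T/4) \<le> - 7 * L"
    proof -
      have "\<delta> * C0 \<ge> 32 * (7 + B * \<delta>\<^sup>2 / 16)" using C0(2) d by (rule bx_4)
      from mult_right_mono[OF this, of L] L0 have "32 * (7 + B * \<delta>\<^sup>2 / 16) * L \<le> \<delta> * C0 * L" by simp
      hence "\<delta> * C0 * L / 32 \<ge> (7 + B * \<delta>\<^sup>2 / 16) * L" by linarith
      thus ?thesis unfolding t2 t3 by (simp add: algebra_simps)
    qed
    have e7: "exp (- 7 * L) = 1 / real n ^ 7"
      by (rule bx_5) (use nr in \<open>simp_all add: L_def\<close>)
    have pm: "measure M (Em m) \<le> 4 / real n ^ 7" for m
    proof -
      have "measure M (Em m) \<le> 4 * exp (4*B*t\<^sup>2*real n - t*(T/4))"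
        unfolding Em_def by (rule P.point_bound[OF rv indep mgk B t0 t1]) simp
      also have "\<dots> \<le> 4 * exp (- 7 * L)" using expo by simp
      finally show ?thesis unfolding e7 by simp
    qed
    have st4: "(\<Sum>m\<le>N. measure M (Em m)) \<le> 40 / (real n)\<^sup>2"
    proof -
      have "(\<Sum>m\<le>N. measure M (Em m)) \<le> (\<Sum>m\<le>N. 4 / real n ^ 7)" by (rule sum_mono) (rule pm)
      also have "\<dots> = real (N + 1) * (4 / real n ^ 7)" by simp
      also have "real (N + 1) \<le> 10 * real n ^ 4"
      proof -
        have "2 * pi / h = 2 * pi * real n ^ 4" unfolding h_def by simp
        hence "real N \<le> 2 * pi * real n ^ 4 + 1" unfolding N_def by (simp add: of_nat_nat)
        moreover have "real n ^ 4 \<ge> 1" using nr by simp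
        ultimately show ?thesis by (rule aux_4)
      qed
      hence "real (N + 1) * (4 / real n ^ 7) \<le> 10 * real n ^ 4 * (4 / real n ^ 7)"
        by (rule mult_right_mono) simp
      also have "\<dots> = 40 / real n ^ 3" using nr by (intro aux_2) simp
      also have "\<dots> \<le> 40 / (real n)\<^sup>2" using nr by (rule aux_3)
      finally show ?thesis by simp
    qed
    have "m1 / (real n)\<^sup>2 + 40 / (real n)\<^sup>2 \<le> C1 / (real n)\<^sup>2"
      unfolding C1_def by (simp add: add_divide_distrib[symmetric] divide_right_mono)
    thus ?thesis using st1 st2 st3 st4 by linarith
  qed
  have "C0 > 0" "C1 > 0" using C0 C1 by auto
  thus ?thesis using main by blast
qed

end
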